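(* Let $K$ be a simplicial complex on $[m]$ and $\mathbf{k}$ a commutative ring. Let $I,J\subset[m]$ with $I\cap J=\varnothing$, $\alpha\in\widetilde H^i(K_I;\mathbf{k})$, $\beta\in\widetilde H^j(K_J;\mathbf{k})$. Suppose $I\subset I'\subset I\cup J$ and $\alpha=\phi^*(\alpha')$ for some $\alpha'\in\widetilde H^i(K_{I'};\mathbf{k})$, where $\phi:K_I\hookrightarrow K_{I'}$ is the inclusion. Let $J'=(I\cup J)\setminus I'$ and $\beta'=\psi^*(\beta)$, where $\psi:K_{J'}\hookrightarrow K_J$ is the inclusion. Then $\alpha\cdot\beta=\alpha'\cdot\beta'$ in the Baskakov–Hochster ring of $K$.
   Context: $K_I$ is the full subcomplex on $I$. The Baskakov–Hochster ring of $K$ is $\bigoplus_{J\subset[m]}\widetilde H^*(K_J;\mathbf{k})$ (with $\widetilde H^{-1}(K_\varnothing)=\mathbf{k}$) with the product which, for $I\cap J=\varnothing$, is the map $\widetilde H^{p}(K_I)\otimes\widetilde H^{q}(K_J)\to\widetilde H^{p+q+1}(K_{I\cup J})$ induced by the inclusion $K_{I\cup J}\hookrightarrow K_I*K_J$ and the cochain isomorphism $\widetilde C^{p}(K_I)\otimes\widetilde C^{q}(K_J)\to\widetilde C^{p+q+1}(K_I*K_J)$, $\sigma\otimes\tau\mapsto\sigma\cup\tau$, and is zero when $I\cap J\neq\varnothing$. *)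

theory Defs
  imports Main
begin

text \<open>A simplicial complex on [m] = {1..m}: a family of subsets of [m], containing the
  empty simplex, closed under taking subsets (ghost vertices allowed).\<close>
definition simplicial_complex :: "nat \<Rightarrow> nat set set \<Rightarrow> bool" where
  "simplicial_complex m K \<longleftrightarrow> {} \<in> K \<and> (\<forall>\<sigma>\<in>K. \<sigma> \<subseteq> {1..m})
     \<and> (\<forall>\<sigma>\<in>K. \<forall>\<tau>. \<tau> \<subseteq> \<sigma> \<longrightarrow> \<tau> \<in> K)"

definition full_sub :: "nat set set \<Rightarrow> nat set \<Rightarrow> nat set set" where
  "full_sub K I = {\<sigma>\<in>K. \<sigma> \<subseteq> I}"

definition simplices :: "nat set set \<Rightarrow> int \<Rightarrow> nat set set" where
  "simplices K p = {\<sigma>\<in>K. int (card \<sigma>) = p + 1}"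

text \<open>Cochains are functions on simplices (values elsewhere are irrelevant); simplices are
  oriented by the natural order of their vertices. Augmented (reduced) coboundary.\<close>
definition coboundary :: "(nat set \<Rightarrow> 'k::comm_ring_1) \<Rightarrow> nat set \<Rightarrow> 'k" where
  "coboundary f \<sigma> = (\<Sum>k<card \<sigma>. (-1)^k * f (\<sigma> - {sorted_list_of_set \<sigma> ! k}))"

definition cocycle :: "nat set set \<Rightarrow> int \<Rightarrow> (nat set \<Rightarrow> 'k::comm_ring_1) \<Rightarrow> bool" where
  "cocycle K p f \<longleftrightarrow> (\<forall>\<sigma>\<in>simplices K (p + 1). coboundary f \<sigma> = 0)"

definition is_coboundary :: "nat set set \<Rightarrow> int \<Rightarrow> (nat set \<Rightarrow> 'k::comm_ring_1) \<Rightarrow> bool" where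
  "is_coboundary K p f \<longleftrightarrow> (\<exists>h. \<forall>\<sigma>\<in>simplices K p. f \<sigma> = coboundary h \<sigma>)"

definition cohom_class :: "nat set set \<Rightarrow> int \<Rightarrow> (nat set \<Rightarrow> 'k::comm_ring_1) \<Rightarrow> (nat set \<Rightarrow> 'k) set" where
  "cohom_class K p f = {g. cocycle K p g \<and> is_coboundary K p (\<lambda>\<sigma>. f \<sigma> - g \<sigma>)}"

definition rcohom :: "nat set set \<Rightarrow> int \<Rightarrow> (nat set \<Rightarrow> 'k::comm_ring_1) set set" where
  "rcohom K p = {cohom_class K p f | f. cocycle K p f}"

text \<open>Map induced in degree p by the inclusion of a subcomplex L (restriction of cochains):
  the class of the restriction of any representative.\<close>
definition induced_incl :: "nat set set \<Rightarrow> int \<Rightarrow> (nat set \<Rightarrow> 'k::comm_ring_1) set \<Rightarrow> (nat set \<Rightarrow> 'k) set" where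
  "induced_incl L p A = cohom_class L p (SOME f. f \<in> A)"

text \<open>The cochain on K_{I \<union> J} obtained from f \<otimes> g under
  C^p(K_I) \<otimes> C^q(K_J) \<rightarrow> C^{p+q+1}(K_I * K_J), \<sigma> \<otimes> \<tau> \<mapsto> \<sigma> \<union> \<tau>
  (join simplex oriented with the vertices of \<sigma> before those of \<tau>),
  restricted to K_{I \<union> J}.  Evaluated on the naturally ordered simplex \<rho> this gives
  the shuffle sign.\<close>
definition shuffle_inv :: "nat set \<Rightarrow> nat set \<Rightarrow> nat" where
  "shuffle_inv A B = card {(x, y). x \<in> A \<and> y \<in> B \<and> y < x}"

definition join_cochain :: "nat set \<Rightarrow> nat set \<Rightarrow> int \<Rightarrow> int \<Rightarrow> (nat set \<Rightarrow> 'k::comm_ring_1)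
    \<Rightarrow> (nat set \<Rightarrow> 'k) \<Rightarrow> nat set \<Rightarrow> 'k" where
  "join_cochain I J p q f g \<rho> =
     (if int (card (\<rho> \<inter> I)) = p + 1 \<and> int (card (\<rho> \<inter> J)) = q + 1
      then (-1) ^ shuffle_inv (\<rho> \<inter> I) (\<rho> \<inter> J) * f (\<rho> \<inter> I) * g (\<rho> \<inter> J)
      else 0)"

definition bh_mult :: "nat set set \<Rightarrow> nat set \<Rightarrow> nat set \<Rightarrow> int \<Rightarrow> int
    \<Rightarrow> (nat set \<Rightarrow> 'k::comm_ring_1) set \<Rightarrow> (nat set \<Rightarrow> 'k) set \<Rightarrow> (nat set \<Rightarrow> 'k) set" where
  "bh_mult K I J p q A B =
     (if I \<inter> J = {}
      then cohom_class (full_sub K (I \<union> J)) (p + q + 1)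
             (join_cochain I J p q (SOME f. f \<in> A) (SOME g. g \<in> B))
      else cohom_class (full_sub K (I \<union> J)) (p + q + 1) (\<lambda>_. 0))"

end

theory Submission
  imports Defs
begin


definition pos :: "nat set \<Rightarrow> nat \<Rightarrow> nat" where
  "pos S y = card {z\<in>S. z < y}"

lemma pos_nth:
  assumes "sorted_wrt (<) xs" "k < length xs"
  shows "pos (set xs) (xs ! k) = k"
proof -
  have d: "distinct xs" using assms(1) strict_sorted_iff by blast
  have "{z\<in>set xs. z < xs!k} = (\<lambda>l. xs!l) ` {..<k}"
  proof (intro set_eqI iffI)
    fix z assume "z \<in> {z\<in>set xs. z < xs!k}"
    then obtain l where l: "l < length xs" "z = xs!l" "xs!l < xs!k" by (auto simp: in_set_conv_nth)
    have "l < k"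
    proof (rule ccontr)
      assume "\<not> l < k"
      then have "k \<le> l" by simp
      then have "xs!k \<le> xs!l" using assms l
        by (metis order.order_iff_strict sorted_wrt_nth_less)
      then show False using l by simp
    qed
    then show "z \<in> (\<lambda>l. xs!l) ` {..<k}" using l by auto
  next
    fix z assume "z \<in> (\<lambda>l. xs!l) ` {..<k}"
    then obtain l where "l < k" "z = xs!l" by auto
    then show "z \<in> {z\<in>set xs. z < xs!k}" using assms
      by (auto simp: sorted_wrt_nth_less)
  qed
  moreover have "inj_on (\<lambda>l. xs!l) {..<k}"
    using d assms(2) by (auto simp: inj_on_def nth_eq_iff_index_eq)
  ultimately show ?thesis unfolding pos_def by (simp add: card_image)
qed

lemma cob_sum:
  assumes "finite \<sigma>"
  shows "coboundary f \<sigma> = (\<Sum>y\<in>\<sigma>. (-1)^pos \<sigma> y * f (\<sigma> - {y}))"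
proof -
  define xs where "xs = sorted_list_of_set \<sigma>"
  have ss: "sorted_wrt (<) xs" and st: "set xs = \<sigma>" and len: "length xs = card \<sigma>"
    using assms by (auto simp: xs_def strict_sorted_list_of_set)
  have d: "distinct xs" using ss strict_sorted_iff by blast
  have bij: "bij_betw (\<lambda>k. xs!k) {..<card \<sigma>} \<sigma>"
    using d len st by (metis atLeast0LessThan bij_betw_nth)
  have "(\<Sum>y\<in>\<sigma>. (-1)^pos \<sigma> y * f (\<sigma> - {y})) = (\<Sum>k<card \<sigma>. (-1)^pos \<sigma> (xs!k) * f (\<sigma> - {xs!k}))"
    using sum.reindex_bij_betw[OF bij, symmetric] by simp
  also have "\<dots> = (\<Sum>k<card \<sigma>. (-1)^k * f (\<sigma> - {xs!k}))"
    using pos_nth[OF ss] st len by (intro sum.cong) auto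
  finally show ?thesis unfolding coboundary_def xs_def by simp
qed



lemma pos_union:
  assumes "finite a" "finite b" "a \<inter> b = {}"
  shows "pos (a \<union> b) y = pos a y + pos b y"
proof -
  have "{z\<in>a \<union> b. z < y} = {z\<in>a. z<y} \<union> {z\<in>b. z<y}" by auto
  then show ?thesis unfolding pos_def using assms by (simp add: card_Un_disjoint disjoint_iff)
qed

lemma pos_compl:
  assumes "finite a" "x \<notin> a"
  shows "pos a x + card {u\<in>a. x < u} = card a"
proof -
  have "a = {z\<in>a. z < x} \<union> {u\<in>a. x < u}" using assms(2) by (auto simp: nat_neq_iff) (metis linorder_neqE_nat)
  then have "card a = card ({z\<in>a. z < x} \<union> {u\<in>a. x < u})" by simp
  also have "\<dots> = pos a x + card {u\<in>a. x < u}" unfolding pos_def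
    using assms(1) by (subst card_Un_disjoint) auto
  finally show ?thesis by simp
qed

lemma sh_insert_left:
  assumes "finite a" "finite b" "x \<notin> a"
  shows "shuffle_inv (insert x a) b = shuffle_inv a b + pos b x"
proof -
  have e: "{(u, v). u \<in> insert x a \<and> v \<in> b \<and> v < u} =
        {(u, v). u \<in> a \<and> v \<in> b \<and> v < u} \<union> (\<lambda>v. (x, v)) ` {v\<in>b. v < x}" by auto
  have f: "finite {(u, v). u \<in> a \<and> v \<in> b \<and> v < u}"
    by (rule finite_subset[of _ "a \<times> b"]) (use assms in auto)
  have "card ((\<lambda>v. (x, v)) ` {v\<in>b. v < x}) = pos b x"
    unfolding pos_def by (subst card_image) (auto simp: inj_on_def)
  moreover have "card ({(u, v). u \<in> a \<and> v \<in> b \<and> v < u} \<union> (\<lambda>v. (x, v)) ` {v\<in>b. v < x})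
      = card {(u, v). u \<in> a \<and> v \<in> b \<and> v < u} + card ((\<lambda>v. (x, v)) ` {v\<in>b. v < x})"
    using f assms by (intro card_Un_disjoint) auto
  ultimately show ?thesis unfolding shuffle_inv_def e by simp
qed

lemma sh_insert_right:
  assumes "finite a" "finite b" "x \<notin> b"
  shows "shuffle_inv a (insert x b) = shuffle_inv a b + card {u\<in>a. x < u}"
proof -
  have e: "{(u, v). u \<in> a \<and> v \<in> insert x b \<and> v < u} =
        {(u, v). u \<in> a \<and> v \<in> b \<and> v < u} \<union> (\<lambda>u. (u, x)) ` {u\<in>a. x < u}" by auto
  have f: "finite {(u, v). u \<in> a \<and> v \<in> b \<and> v < u}"
    by (rule finite_subset[of _ "a \<times> b"]) (use assms in auto)
  have "card ((\<lambda>u. (u, x)) ` {u\<in>a. x < u}) = card {u\<in>a. x < u}"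
    by (subst card_image) (auto simp: inj_on_def)
  moreover have "card ({(u, v). u \<in> a \<and> v \<in> b \<and> v < u} \<union> (\<lambda>u. (u, x)) ` {u\<in>a. x < u})
      = card {(u, v). u \<in> a \<and> v \<in> b \<and> v < u} + card ((\<lambda>u. (u, x)) ` {u\<in>a. x < u})"
    using f assms by (intro card_Un_disjoint) auto
  ultimately show ?thesis unfolding shuffle_inv_def e by simp
qed

lemma core_left:
  assumes "finite a" "finite b" "a \<inter> b = {}" "y \<in> a"
  shows "pos (a \<union> b) y + shuffle_inv (a - {y}) b = pos a y + shuffle_inv a b"
proof -
  have "shuffle_inv a b = shuffle_inv (insert y (a - {y})) b" using assms(4) by (simp add: insert_absorb)
  also have "\<dots> = shuffle_inv (a - {y}) b + pos b y" using assms by (intro sh_insert_left) auto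
  finally show ?thesis using pos_union[OF assms(1-3)] by simp
qed

lemma core_right:
  assumes "finite a" "finite b" "a \<inter> b = {}" "y \<in> b"
  shows "pos (a \<union> b) y + shuffle_inv a (b - {y}) + 2 * card {u\<in>a. y < u}
       = pos b y + card a + shuffle_inv a b"
proof -
  have "shuffle_inv a b = shuffle_inv a (insert y (b - {y}))" using assms(4) by (simp add: insert_absorb)
  also have "\<dots> = shuffle_inv a (b - {y}) + card {u\<in>a. y < u}" using assms by (intro sh_insert_right) auto
  finally have 1: "shuffle_inv a b = shuffle_inv a (b - {y}) + card {u\<in>a. y < u}" .
  have 2: "pos a y + card {u\<in>a. y < u} = card a" using assms by (intro pos_compl) auto
  show ?thesis using pos_union[OF assms(1-3)] 1 2 by simp
qed

lemma neg1_pow_eq: "m + 2 * k = n \<Longrightarrow> (-1::'k::comm_ring_1)^m = (-1)^n"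
  by (auto simp: power_add power_mult)



lemma sign_left:
  assumes "finite a" "finite b" "a \<inter> b = {}" "y \<in> a"
  shows "(-1::'k::comm_ring_1)^pos (a \<union> b) y * (-1)^shuffle_inv (a - {y}) b
       = (-1)^pos a y * (-1)^shuffle_inv a b"
  using core_left[OF assms] by (metis power_add)

lemma sign_right:
  assumes "finite a" "finite b" "a \<inter> b = {}" "y \<in> b"
  shows "(-1::'k::comm_ring_1)^pos (a \<union> b) y * (-1)^shuffle_inv a (b - {y})
       = (-1)^card a * ((-1)^pos b y * (-1)^shuffle_inv a b)"
proof -
  have "(-1::'k)^(pos (a \<union> b) y + shuffle_inv a (b - {y})) = (-1)^(pos b y + card a + shuffle_inv a b)"
    using core_right[OF assms] by (intro neg1_pow_eq) (simp add: add.assoc)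
  then show ?thesis by (simp add: power_add mult_ac)
qed

lemma int_card_diff1: "finite a \<Longrightarrow> y \<in> a \<Longrightarrow> int (card (a - {y})) = int (card a) - 1"
  using card.remove[of a y] by simp

lemma leibniz:
  fixes p q :: "nat set \<Rightarrow> 'k::comm_ring_1"
  assumes "finite \<rho>" "A \<inter> B = {}" "\<rho> \<subseteq> A \<union> B"
  shows "coboundary (join_cochain A B dp dq p q) \<rho>
       = join_cochain A B (dp+1) dq (coboundary p) q \<rho>
         + (-1)^card (\<rho> \<inter> A) * join_cochain A B dp (dq+1) p (coboundary q) \<rho>"
proof -
  define a where "a = \<rho> \<inter> A"
  define b where "b = \<rho> \<inter> B"
  have fa: "finite a" and fb: "finite b" using assms(1) by (auto simp: a_def b_def)
  have ab: "a \<inter> b = {}" using assms(2) by (auto simp: a_def b_def)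
  have rho: "\<rho> = a \<union> b" using assms(3) by (auto simp: a_def b_def)
  have sA: "\<And>y. y \<in> a \<Longrightarrow> (\<rho> - {y}) \<inter> A = a - {y} \<and> (\<rho> - {y}) \<inter> B = b"
    using assms(2) by (auto simp: a_def b_def)
  have sB: "\<And>y. y \<in> b \<Longrightarrow> (\<rho> - {y}) \<inter> A = a \<and> (\<rho> - {y}) \<inter> B = b - {y}"
    using assms(2) by (auto simp: a_def b_def)
  have "coboundary (join_cochain A B dp dq p q) \<rho>
      = (\<Sum>y\<in>a. (-1)^pos \<rho> y * join_cochain A B dp dq p q (\<rho> - {y}))
      + (\<Sum>y\<in>b. (-1)^pos \<rho> y * join_cochain A B dp dq p q (\<rho> - {y}))"
    unfolding cob_sum[OF assms(1)] using rho fa fb ab by (simp add: sum.union_disjoint)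
  also have "(\<Sum>y\<in>a. (-1)^pos \<rho> y * join_cochain A B dp dq p q (\<rho> - {y}))
      = join_cochain A B (dp+1) dq (coboundary p) q \<rho>"
  proof (cases "int (card a) = dp + 2 \<and> int (card b) = dq + 1")
    case True
    have "(\<Sum>y\<in>a. (-1)^pos \<rho> y * join_cochain A B dp dq p q (\<rho> - {y}))
        = (\<Sum>y\<in>a. (-1)^shuffle_inv a b * ((-1)^pos a y * p (a - {y})) * q b)"
    proof (intro sum.cong refl)
      fix y assume y: "y \<in> a"
      have c: "int (card (a - {y})) = dp + 1" using True y fa int_card_diff1[of a y] by simp
      have "(-1)^pos \<rho> y * join_cochain A B dp dq p q (\<rho> - {y})
          = ((-1)^pos \<rho> y * (-1)^shuffle_inv (a - {y}) b) * p (a - {y}) * q b"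
        unfolding join_cochain_def using sA[OF y] c True by (simp add: mult_ac)
      also have "\<dots> = (-1)^shuffle_inv a b * ((-1)^pos a y * p (a - {y})) * q b"
        unfolding sign_left[OF fa fb ab y, folded rho] by (simp add: mult_ac)
      finally show "(-1)^pos \<rho> y * join_cochain A B dp dq p q (\<rho> - {y})
          = (-1)^shuffle_inv a b * ((-1)^pos a y * p (a - {y})) * q b" .
    qed
    also have "\<dots> = (-1)^shuffle_inv a b * coboundary p a * q b"
      unfolding cob_sum[OF fa] by (simp add: sum_distrib_left sum_distrib_right)
    also have "\<dots> = join_cochain A B (dp+1) dq (coboundary p) q \<rho>"
      unfolding join_cochain_def using True by (simp add: a_def[symmetric] b_def[symmetric])
    finally show ?thesis .
  next
    case False
    have "(\<Sum>y\<in>a. (-1)^pos \<rho> y * join_cochain A B dp dq p q (\<rho> - {y})) = 0"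
    proof (intro sum.neutral ballI)
      fix y assume y: "y \<in> a"
      have c: "int (card (a - {y})) = int (card a) - 1" using y fa int_card_diff1[of a y] by simp
      show "(-1)^pos \<rho> y * join_cochain A B dp dq p q (\<rho> - {y}) = 0"
        proof -
        have "\<not> (int (card ((\<rho> - {y}) \<inter> A)) = dp + 1 \<and> int (card ((\<rho> - {y}) \<inter> B)) = dq + 1)"
          using sA[OF y] c False by simp
        then show ?thesis unfolding join_cochain_def by (simp only: if_not_P) simp
      qed
    qed
    moreover have "join_cochain A B (dp+1) dq (coboundary p) q \<rho> = 0"
      unfolding join_cochain_def using False by (auto simp: a_def b_def)
    ultimately show ?thesis by simp
  qed
  also have "(\<Sum>y\<in>b. (-1)^pos \<rho> y * join_cochain A B dp dq p q (\<rho> - {y}))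
      = (-1)^card (\<rho> \<inter> A) * join_cochain A B dp (dq+1) p (coboundary q) \<rho>"
  proof (cases "int (card a) = dp + 1 \<and> int (card b) = dq + 2")
    case True
    have "(\<Sum>y\<in>b. (-1)^pos \<rho> y * join_cochain A B dp dq p q (\<rho> - {y}))
        = (\<Sum>y\<in>b. (-1)^card a * (-1)^shuffle_inv a b * p a * ((-1)^pos b y * q (b - {y})))"
    proof (intro sum.cong refl)
      fix y assume y: "y \<in> b"
      have c: "int (card (b - {y})) = dq + 1" using True y fb int_card_diff1[of b y] by simp
      have "(-1)^pos \<rho> y * join_cochain A B dp dq p q (\<rho> - {y})
          = ((-1)^pos \<rho> y * (-1)^shuffle_inv a (b - {y})) * p a * q (b - {y})"
        unfolding join_cochain_def using sB[OF y] c True by (simp add: mult_ac)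
      also have "\<dots> = (-1)^card a * (-1)^shuffle_inv a b * p a * ((-1)^pos b y * q (b - {y}))"
        unfolding sign_right[OF fa fb ab y, folded rho] by (simp add: mult_ac)
      finally show "(-1)^pos \<rho> y * join_cochain A B dp dq p q (\<rho> - {y})
          = (-1)^card a * (-1)^shuffle_inv a b * p a * ((-1)^pos b y * q (b - {y}))" .
    qed
    also have "\<dots> = (-1)^card a * (-1)^shuffle_inv a b * p a * coboundary q b"
      unfolding cob_sum[OF fb] by (simp add: sum_distrib_left)
    also have "\<dots> = (-1)^card (\<rho> \<inter> A) * join_cochain A B dp (dq+1) p (coboundary q) \<rho>"
      unfolding join_cochain_def using True by (simp add: a_def[symmetric] b_def[symmetric])
    finally show ?thesis .
  next
    case False
    have "(\<Sum>y\<in>b. (-1)^pos \<rho> y * join_cochain A B dp dq p q (\<rho> - {y})) = 0"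
    proof (intro sum.neutral ballI)
      fix y assume y: "y \<in> b"
      have c: "int (card (b - {y})) = int (card b) - 1" using y fb int_card_diff1[of b y] by simp
      show "(-1)^pos \<rho> y * join_cochain A B dp dq p q (\<rho> - {y}) = 0"
        proof -
        have "\<not> (int (card ((\<rho> - {y}) \<inter> A)) = dp + 1 \<and> int (card ((\<rho> - {y}) \<inter> B)) = dq + 1)"
          using sB[OF y] c False by (simp; arith)
        then show ?thesis unfolding join_cochain_def by (simp only: if_not_P) simp
      qed
    qed
    moreover have "join_cochain A B dp (dq+1) p (coboundary q) \<rho> = 0"
      unfolding join_cochain_def using False by (auto simp: a_def b_def)
    ultimately show ?thesis by simp
  qed
  finally show ?thesis .
qed



definition hmt :: "nat set \<Rightarrow> nat set \<Rightarrow> nat \<Rightarrow> int \<Rightarrow> int \<Rightarrow> (nat set \<Rightarrow> 'k::comm_ring_1)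
   \<Rightarrow> (nat set \<Rightarrow> 'k) \<Rightarrow> nat set \<Rightarrow> 'k" where
  "hmt I J' x i j f g \<sigma> = (if x \<in> \<sigma> \<and> int (card (\<sigma> \<inter> I)) = i \<and> int (card (\<sigma> \<inter> J')) = j
     then (-1)^(card (\<sigma> \<inter> I) + shuffle_inv (\<sigma> \<inter> I) (\<sigma> \<inter> J')) * f (insert x (\<sigma> \<inter> I)) * g (insert x (\<sigma> \<inter> J'))
     else 0)"

lemma cob_insert_split:
  assumes "finite a" "x \<notin> a"
  shows "coboundary f (insert x a) = (-1)^pos a x * f a + (\<Sum>y\<in>a. (-1)^pos (insert x a) y * f (insert x a - {y}))"
proof -
  have "pos (insert x a) x = pos a x" unfolding pos_def by (metis (lifting) insert_iff less_irrefl mem_Collect_eq)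
  moreover have "insert x a - {x} = a" using assms(2) by auto
  ultimately show ?thesis using assms by (simp add: cob_sum)
qed

lemma nat_id1:
  assumes "finite a" "finite b" "x \<notin> a" "x \<notin> b" "a \<inter> b = {}" "y \<in> a"
  shows "pos (insert x (a \<union> b)) y + shuffle_inv (a - {y}) b = pos (insert x a) y + shuffle_inv a b"
proof -
  have 1: "pos (insert x a \<union> b) y + shuffle_inv (insert x a - {y}) b = pos (insert x a) y + shuffle_inv (insert x a) b"
    using assms by (intro core_left) auto
  have "insert x a - {y} = insert x (a - {y})" using assms by auto
  then have 2: "shuffle_inv (insert x a - {y}) b = shuffle_inv (a - {y}) b + pos b x"
    using assms by (simp add: sh_insert_left)
  have 3: "shuffle_inv (insert x a) b = shuffle_inv a b + pos b x" using assms by (simp add: sh_insert_left)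
  show ?thesis using 1 2 3 by simp
qed

lemma nat_id2:
  assumes "finite a" "finite b" "x \<notin> a" "x \<notin> b" "a \<inter> b = {}" "y \<in> b"
  shows "pos (insert x (a \<union> b)) y + shuffle_inv a (b - {y}) + 2 * card {u\<in>a. y < u}
     = pos (insert x b) y + card a + shuffle_inv a b"
proof -
  have 1: "pos (a \<union> insert x b) y + shuffle_inv a (insert x b - {y}) + 2 * card {u\<in>a. y < u}
      = pos (insert x b) y + card a + shuffle_inv a (insert x b)"
    using assms by (intro core_right) auto
  have "insert x b - {y} = insert x (b - {y})" using assms by auto
  then have 2: "shuffle_inv a (insert x b - {y}) = shuffle_inv a (b - {y}) + card {u\<in>a. x < u}"
    using assms by (simp add: sh_insert_right)
  have 3: "shuffle_inv a (insert x b) = shuffle_inv a b + card {u\<in>a. x < u}" using assms by (simp add: sh_insert_right)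
  have 4: "a \<union> insert x b = insert x (a \<union> b)" by auto
  show ?thesis using 1 2 3 4 by simp
qed



lemma one_step:
  fixes f g :: "nat set \<Rightarrow> 'k::comm_ring_1"
  assumes fin: "finite (I \<union> J)" and dj: "I \<inter> J = {}" and xJ: "x \<in> J"
    and Kc: "\<forall>\<sigma>\<in>K. \<forall>\<tau>. \<tau> \<subseteq> \<sigma> \<longrightarrow> \<tau> \<in> K"
    and cf: "cocycle (full_sub K (insert x I)) i f"
    and cg: "cocycle (full_sub K J) j g"
  shows "is_coboundary (full_sub K (I \<union> J)) (i + j + 1)
     (\<lambda>\<rho>. join_cochain I J i j f g \<rho> - join_cochain (insert x I) (J - {x}) i j f g \<rho>)"
  unfolding is_coboundary_def
proof (intro exI ballI)
  fix \<rho> assume "\<rho> \<in> simplices (full_sub K (I \<union> J)) (i + j + 1)"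
  then have rK: "\<rho> \<in> K" and rV: "\<rho> \<subseteq> I \<union> J" and cr: "int (card \<rho>) = i + j + 2"
    by (auto simp: simplices_def full_sub_def)
  have fr: "finite \<rho>" using fin rV finite_subset by blast
  define a where "a = \<rho> \<inter> I"
  define b where "b = \<rho> \<inter> (J - {x})"
  have fa: "finite a" and fb: "finite b" using fr by (auto simp: a_def b_def)
  have ab: "a \<inter> b = {}" and xa: "x \<notin> a" and xb: "x \<notin> b" using dj xJ by (auto simp: a_def b_def)
  define H where "H = hmt I (J - {x}) x i j f g"
  define T where "T = (\<lambda>y. (-1::'k)^pos \<rho> y * H (\<rho> - {y}))"
  have cobT: "coboundary H \<rho> = sum T \<rho>" unfolding T_def by (rule cob_sum[OF fr])
  show "join_cochain I J i j f g \<rho> - join_cochain (insert x I) (J - {x}) i j f g \<rho> = coboundary H \<rho>"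
  proof (cases "x \<in> \<rho>")
    case False
    have e1: "\<rho> \<inter> insert x I = a" "\<rho> \<inter> J = b" using False by (auto simp: a_def b_def)
    have "join_cochain I J i j f g \<rho> = join_cochain (insert x I) (J - {x}) i j f g \<rho>"
      unfolding join_cochain_def e1 by (simp add: a_def[symmetric] b_def[symmetric])
    moreover have "sum T \<rho> = 0"
    proof (intro sum.neutral ballI)
      fix y assume "y \<in> \<rho>"
      show "T y = 0" using False unfolding T_def H_def hmt_def by simp
    qed
    ultimately show ?thesis using cobT by simp
  next
    case True
    have rho: "\<rho> = insert x (a \<union> b)" using True rV xJ by (auto simp: a_def b_def)
    have cI: "\<rho> \<inter> insert x I = insert x a" and cJ: "\<rho> \<inter> J = insert x b"
      using True xJ dj by (auto simp: a_def b_def)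
    have crd: "card \<rho> = Suc (card a + card b)" unfolding rho using fa fb ab xa xb
      by (simp add: card_Un_disjoint)
    have cab: "int (card a) + int (card b) = i + j + 1" using cr crd by simp
    have facA: "\<And>y. y \<in> a \<Longrightarrow> (\<rho> - {y}) \<inter> I = a - {y} \<and> (\<rho> - {y}) \<inter> (J - {x}) = b \<and> x \<in> \<rho> - {y}"
      using True xa dj by (auto simp: a_def b_def)
    have facB: "\<And>y. y \<in> b \<Longrightarrow> (\<rho> - {y}) \<inter> I = a \<and> (\<rho> - {y}) \<inter> (J - {x}) = b - {y} \<and> x \<in> \<rho> - {y}"
      using True xb dj by (auto simp: a_def b_def)
    have "sum T \<rho> = sum T (insert x (a \<union> b))" by (simp only: rho[symmetric])
    also have "\<dots> = T x + sum T a + sum T b" using fa fb ab xa xb by (simp add: sum.union_disjoint)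
    also have "T x = 0" unfolding T_def H_def hmt_def by simp
    finally have sT: "coboundary H \<rho> = sum T a + sum T b" using cobT by simp
    have inK: "\<And>s. s \<subseteq> \<rho> \<Longrightarrow> s \<in> K" using Kc rK by blast
    have s1: "insert x a \<subseteq> \<rho>" "insert x b \<subseteq> \<rho>" using rho by auto
    show ?thesis
    proof (cases "int (card a) = i + 1")
      case cA: True
      have cbj: "int (card b) = j" using cab cA by simp
      have Tb: "sum T b = 0"
      proof (intro sum.neutral ballI)
        fix y assume y: "y \<in> b"
        have "\<not> (int (card ((\<rho> - {y}) \<inter> I)) = i)" using facB[OF y] cA by simp
        then show "T y = 0" unfolding T_def H_def hmt_def by simp
      qed
      have sgn: "(-1::'k)^pos \<rho> y * (-1)^(card (a - {y}) + shuffle_inv (a - {y}) b)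
          = (-1)^(shuffle_inv a b + card a + 1) * (-1)^pos (insert x a) y" if y: "y \<in> a" for y
      proof -
        have n1: "pos \<rho> y + shuffle_inv (a - {y}) b = pos (insert x a) y + shuffle_inv a b"
          unfolding rho using nat_id1[OF fa fb xa xb ab y] .
        have n2: "card (a - {y}) + 1 = card a" using fa y card.remove[of a y] by simp
        have "(-1::'k)^(pos \<rho> y + (card (a - {y}) + shuffle_inv (a - {y}) b))
           = (-1)^((shuffle_inv a b + card a + 1) + pos (insert x a) y)"
          by (rule neg1_pow_eq[where k=1]) (use n1 n2 in simp)
        then show ?thesis by (simp add: power_add)
      qed
      have Ta: "sum T a = (\<Sum>y\<in>a. (-1)^(shuffle_inv a b + card a + 1) * g (insert x b)
                 * ((-1)^pos (insert x a) y * f (insert x a - {y})))"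
      proof (rule sum.cong[OF refl])
        fix y assume y: "y \<in> a"
        have ci: "int (card (a - {y})) = i" using cA fa y int_card_diff1[of a y] by simp
        have ins: "insert x (a - {y}) = insert x a - {y}" using y xa by auto
        have Hy: "H (\<rho> - {y}) = (-1)^(card (a - {y}) + shuffle_inv (a - {y}) b) * f (insert x a - {y}) * g (insert x b)"
          unfolding H_def hmt_def using facA[OF y] ci cbj ins by simp
        have "T y = ((-1)^pos \<rho> y * (-1)^(card (a - {y}) + shuffle_inv (a - {y}) b)) * (f (insert x a - {y}) * g (insert x b))"
          unfolding T_def Hy by (simp add: mult_ac)
        also have "\<dots> = ((-1)^(shuffle_inv a b + card a + 1) * (-1)^pos (insert x a) y) * (f (insert x a - {y}) * g (insert x b))"
          by (simp only: sgn[OF y])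
        finally show "T y = (-1)^(shuffle_inv a b + card a + 1) * g (insert x b)
                 * ((-1)^pos (insert x a) y * f (insert x a - {y}))" by (simp add: mult_ac)
      qed
      have "insert x a \<in> simplices (full_sub K (insert x I)) (i + 1)"
        using inK[OF s1(1)] cA fa xa by (auto simp: simplices_def full_sub_def a_def)
      then have "coboundary f (insert x a) = 0" using cf by (simp add: cocycle_def)
      then have csum: "(\<Sum>y\<in>a. (-1)^pos (insert x a) y * f (insert x a - {y})) = - ((-1)^pos a x * f a)"
        using cob_insert_split[OF fa xa, of f] by (simp add: eq_neg_iff_add_eq_0 add.commute)
      have "sum T a = (-1)^(shuffle_inv a b + card a + 1) * g (insert x b) * (- ((-1)^pos a x * f a))"
        unfolding Ta csum[symmetric] by (simp add: sum_distrib_left)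
      also have "\<dots> = (-1)^(shuffle_inv a b + card a + pos a x) * f a * g (insert x b)"
        by (simp add: power_add mult_ac)
      also have "\<dots> = (-1)^shuffle_inv a (insert x b) * f a * g (insert x b)"
      proof -
        have "shuffle_inv a (insert x b) = shuffle_inv a b + card {u\<in>a. x < u}" using fa fb xb by (simp add: sh_insert_right)
        moreover have "pos a x + card {u\<in>a. x < u} = card a" using fa xa by (rule pos_compl)
        ultimately have "shuffle_inv a b + card a + pos a x = shuffle_inv a (insert x b) + 2 * pos a x" by simp
        then have "(-1::'k)^shuffle_inv a (insert x b) = (-1)^(shuffle_inv a b + card a + pos a x)"
          by (intro neg1_pow_eq[where k="pos a x"]) simp
        then show ?thesis by simp
      qed
      finally have Ta2: "sum T a = (-1)^shuffle_inv a (insert x b) * f a * g (insert x b)" .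
      have J1: "join_cochain I J i j f g \<rho> = (-1)^shuffle_inv a (insert x b) * f a * g (insert x b)"
        unfolding join_cochain_def cJ using cA cbj fb xb by (simp add: a_def[symmetric])
      have J2: "join_cochain (insert x I) (J - {x}) i j f g \<rho> = 0"
        unfolding join_cochain_def cI using cA fa xa by simp
      show ?thesis using J1 J2 sT Ta2 Tb by simp
    next
      case nA: False
      show ?thesis
      proof (cases "int (card a) = i")
        case cA: True
        have cbj: "int (card b) = j + 1" using cab cA by simp
        have Ta: "sum T a = 0"
        proof (intro sum.neutral ballI)
          fix y assume y: "y \<in> a"
          have "int (card (a - {y})) = int (card a) - 1" using fa y int_card_diff1[of a y] by simp
          then have "\<not> (int (card ((\<rho> - {y}) \<inter> I)) = i)" using facA[OF y] cA by simp
          then show "T y = 0" unfolding T_def H_def hmt_def by simp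
        qed
        have sgn: "(-1::'k)^pos \<rho> y * (-1)^(card a + shuffle_inv a (b - {y}))
            = (-1)^shuffle_inv a b * (-1)^pos (insert x b) y" if y: "y \<in> b" for y
        proof -
          have n1: "pos \<rho> y + shuffle_inv a (b - {y}) + 2 * card {u\<in>a. y < u} = pos (insert x b) y + card a + shuffle_inv a b"
            unfolding rho using nat_id2[OF fa fb xa xb ab y] .
          have "(-1::'k)^(pos \<rho> y + (card a + shuffle_inv a (b - {y})))
             = (-1)^(shuffle_inv a b + pos (insert x b) y)"
          proof -
            have "(-1::'k)^(pos \<rho> y + (card a + shuffle_inv a (b - {y})))
               = (-1)^(pos \<rho> y + (card a + shuffle_inv a (b - {y})) + 2 * card {u\<in>a. y < u})"
              by (rule neg1_pow_eq) simp
            also have "\<dots> = (-1)^(shuffle_inv a b + pos (insert x b) y + 2 * card a)" proof -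
              have eq: "pos \<rho> y + (card a + shuffle_inv a (b - {y})) + 2 * card {u\<in>a. y < u}
                  = shuffle_inv a b + pos (insert x b) y + 2 * card a" using n1 by linarith
              show ?thesis by (simp only: eq)
            qed
            also have "\<dots> = (-1)^(shuffle_inv a b + pos (insert x b) y)"
              by (rule neg1_pow_eq[symmetric]) simp
            finally show ?thesis .
          qed
          then show ?thesis by (simp add: power_add)
        qed
        have Tb: "sum T b = (\<Sum>y\<in>b. (-1)^shuffle_inv a b * f (insert x a)
                   * ((-1)^pos (insert x b) y * g (insert x b - {y})))"
        proof (rule sum.cong[OF refl])
          fix y assume y: "y \<in> b"
          have cj: "int (card (b - {y})) = j" using cbj fb y int_card_diff1[of b y] by simp
          have ins: "insert x (b - {y}) = insert x b - {y}" using y xb by auto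
          have Hy: "H (\<rho> - {y}) = (-1)^(card a + shuffle_inv a (b - {y})) * f (insert x a) * g (insert x b - {y})"
            unfolding H_def hmt_def using facB[OF y] cj cA ins by simp
          have "T y = ((-1)^pos \<rho> y * (-1)^(card a + shuffle_inv a (b - {y}))) * (f (insert x a) * g (insert x b - {y}))"
            unfolding T_def Hy by (simp add: mult_ac)
          also have "\<dots> = ((-1)^shuffle_inv a b * (-1)^pos (insert x b) y) * (f (insert x a) * g (insert x b - {y}))"
            by (simp only: sgn[OF y])
          finally show "T y = (-1)^shuffle_inv a b * f (insert x a)
                   * ((-1)^pos (insert x b) y * g (insert x b - {y}))" by (simp add: mult_ac)
        qed
        have "insert x b \<in> simplices (full_sub K J) (j + 1)"
          using inK[OF s1(2)] cbj fb xb xJ by (auto simp: simplices_def full_sub_def b_def)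
        then have "coboundary g (insert x b) = 0" using cg by (simp add: cocycle_def)
        then have csum: "(\<Sum>y\<in>b. (-1)^pos (insert x b) y * g (insert x b - {y})) = - ((-1)^pos b x * g b)"
          using cob_insert_split[OF fb xb, of g] by (simp add: eq_neg_iff_add_eq_0 add.commute)
        have "sum T b = (-1)^shuffle_inv a b * f (insert x a) * (- ((-1)^pos b x * g b))"
          unfolding Tb csum[symmetric] by (simp add: sum_distrib_left)
        also have "\<dots> = - ((-1)^shuffle_inv (insert x a) b * f (insert x a) * g b)"
          using sh_insert_left[OF fa fb xa] by (simp add: power_add mult_ac)
        finally have Tb2: "sum T b = - ((-1)^shuffle_inv (insert x a) b * f (insert x a) * g b)" .
        have J1: "join_cochain I J i j f g \<rho> = 0"
          unfolding join_cochain_def using nA by (simp add: a_def[symmetric])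
        have J2: "join_cochain (insert x I) (J - {x}) i j f g \<rho> = (-1)^shuffle_inv (insert x a) b * f (insert x a) * g b"
          unfolding join_cochain_def cI using cA cbj fa xa by (simp add: b_def[symmetric])
        show ?thesis using J1 J2 sT Ta Tb2 by simp
      next
        case nB: False
        have Ta: "sum T a = 0"
        proof (intro sum.neutral ballI)
          fix y assume y: "y \<in> a"
          have "int (card (a - {y})) = int (card a) - 1" using fa y int_card_diff1[of a y] by simp
          then have "\<not> (int (card ((\<rho> - {y}) \<inter> I)) = i)" using facA[OF y] nA by simp
          then show "T y = 0" unfolding T_def H_def hmt_def by simp
        qed
        have Tb: "sum T b = 0"
        proof (intro sum.neutral ballI)
          fix y assume y: "y \<in> b"
          have "\<not> (int (card ((\<rho> - {y}) \<inter> I)) = i)" using facB[OF y] nB by simp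
          then show "T y = 0" unfolding T_def H_def hmt_def by simp
        qed
        have J1: "join_cochain I J i j f g \<rho> = 0"
          unfolding join_cochain_def using nA by (simp add: a_def[symmetric])
        have J2: "join_cochain (insert x I) (J - {x}) i j f g \<rho> = 0"
          unfolding join_cochain_def cI using nB fa xa by simp
        show ?thesis using J1 J2 sT Ta Tb by simp
      qed
    qed
  qed
qed



lemma cob_lin:
  "coboundary (\<lambda>\<sigma>. c * u \<sigma> + d * v \<sigma>) \<rho> = c * coboundary u \<rho> + d * coboundary v \<rho>"
  unfolding coboundary_def by (simp add: sum.distrib sum_distrib_left algebra_simps)

lemma cob_zero: "coboundary (\<lambda>\<sigma>. 0::'k::comm_ring_1) \<rho> = 0"
  unfolding coboundary_def by simp

lemma is_cob_lin:
  assumes "is_coboundary K p u" "is_coboundary K p v"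
  shows "is_coboundary K p (\<lambda>\<sigma>. c * u \<sigma> + d * v \<sigma>)"
proof -
  obtain h1 where h1: "\<forall>\<sigma>\<in>simplices K p. u \<sigma> = coboundary h1 \<sigma>" using assms(1) unfolding is_coboundary_def by blast
  obtain h2 where h2: "\<forall>\<sigma>\<in>simplices K p. v \<sigma> = coboundary h2 \<sigma>" using assms(2) unfolding is_coboundary_def by blast
  show ?thesis unfolding is_coboundary_def
    by (rule exI[where x="\<lambda>\<sigma>. c * h1 \<sigma> + d * h2 \<sigma>"]) (simp add: cob_lin h1 h2)
qed

lemma is_cob_neg:
  assumes "is_coboundary K p (\<lambda>\<sigma>. u \<sigma> - v \<sigma>)"
  shows "is_coboundary K p (\<lambda>\<sigma>. v \<sigma> - u \<sigma>)"
  using is_cob_lin[OF assms assms, of "-1" 0] by simp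

lemma is_cob_trans:
  assumes "is_coboundary K p (\<lambda>\<sigma>. u \<sigma> - v \<sigma>)" "is_coboundary K p (\<lambda>\<sigma>. v \<sigma> - w \<sigma>)"
  shows "is_coboundary K p (\<lambda>\<sigma>. u \<sigma> - w \<sigma>)"
  using is_cob_lin[OF assms, of 1 1] by simp

lemma is_cob_zero: "is_coboundary K p (\<lambda>\<sigma>. 0::'k::comm_ring_1)"
  unfolding is_coboundary_def by (rule exI[where x="\<lambda>\<sigma>. 0"]) (simp add: cob_zero)

lemma class_eq:
  assumes "is_coboundary K p (\<lambda>\<sigma>. u \<sigma> - v \<sigma>)"
  shows "cohom_class K p u = cohom_class K p v"
  unfolding cohom_class_def
proof (intro Collect_cong conj_cong refl iffI)
  fix g assume "is_coboundary K p (\<lambda>\<sigma>. u \<sigma> - g \<sigma>)"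
  from is_cob_trans[OF is_cob_neg[OF assms] this] show "is_coboundary K p (\<lambda>\<sigma>. v \<sigma> - g \<sigma>)" .
next
  fix g assume "is_coboundary K p (\<lambda>\<sigma>. v \<sigma> - g \<sigma>)"
  from is_cob_trans[OF assms this] show "is_coboundary K p (\<lambda>\<sigma>. u \<sigma> - g \<sigma>)" .
qed

lemma cocycle_mono:
  assumes "A \<subseteq> B" "cocycle (full_sub K B) p f"
  shows "cocycle (full_sub K A) p f"
  using assms unfolding cocycle_def simplices_def full_sub_def by auto

lemma multi_step:
  assumes fL: "finite L" and fin: "finite (I \<union> J)" and dj: "I \<inter> J = {}" and LJ: "L \<subseteq> J"
    and Kc: "\<forall>\<sigma>\<in>K. \<forall>\<tau>. \<tau> \<subseteq> \<sigma> \<longrightarrow> \<tau> \<in> K"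
  shows "\<forall>f g. cocycle (full_sub K (I \<union> L)) i f \<longrightarrow> cocycle (full_sub K J) j g \<longrightarrow>
     is_coboundary (full_sub K (I \<union> J)) (i + j + 1)
       (\<lambda>\<rho>. join_cochain I J i j f g \<rho> - join_cochain (I \<union> L) (J - L) i j f (g::nat set \<Rightarrow> 'k::comm_ring_1) \<rho>)"
  using fL LJ
proof (induction L rule: finite_induct)
  case empty
  then show ?case by (simp add: is_cob_zero)
next
  case (insert x L)
  show ?case
  proof (intro allI impI)
    fix f g :: "nat set \<Rightarrow> 'k"
    assume cf: "cocycle (full_sub K (I \<union> insert x L)) i f" and cg: "cocycle (full_sub K J) j g"
    have cf0: "cocycle (full_sub K (I \<union> L)) i f" by (rule cocycle_mono[OF _ cf]) auto
    have 1: "is_coboundary (full_sub K (I \<union> J)) (i + j + 1)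
       (\<lambda>\<rho>. join_cochain I J i j f g \<rho> - join_cochain (I \<union> L) (J - L) i j f g \<rho>)"
      using insert.IH insert.prems cf0 cg by auto
    have xJ: "x \<in> J - L" using insert.prems insert.hyps by auto
    have e1: "(I \<union> L) \<union> (J - L) = I \<union> J" using insert.prems by auto
    have fin2: "finite ((I \<union> L) \<union> (J - L))" using fin e1 by simp
    have dj2: "(I \<union> L) \<inter> (J - L) = {}" using dj by auto
    have cf2: "cocycle (full_sub K (insert x (I \<union> L))) i f" using cf by (simp only: Un_insert_right)
    have cg2: "cocycle (full_sub K (J - L)) j g" by (rule cocycle_mono[OF _ cg]) auto
    have 2: "is_coboundary (full_sub K (I \<union> J)) (i + j + 1)
       (\<lambda>\<rho>. join_cochain (I \<union> L) (J - L) i j f g \<rho> - join_cochain (insert x (I \<union> L)) (J - L - {x}) i j f g \<rho>)"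
      using one_step[OF fin2 dj2 xJ Kc cf2 cg2] e1 by simp
    have e2: "insert x (I \<union> L) = I \<union> insert x L" "J - L - {x} = J - insert x L" by auto
    show "is_coboundary (full_sub K (I \<union> J)) (i + j + 1)
       (\<lambda>\<rho>. join_cochain I J i j f g \<rho> - join_cochain (I \<union> insert x L) (J - insert x L) i j f g \<rho>)"
      using is_cob_trans[OF 1 2] by (simp only: e2(2) Un_insert_right)
  qed
qed



lemma cob_scale: "coboundary (\<lambda>\<sigma>. c * u \<sigma>) \<rho> = c * coboundary u \<rho>"
  unfolding coboundary_def by (simp add: sum_distrib_left mult_ac)

lemma rep_left:
  fixes g f1 f2 :: "nat set \<Rightarrow> 'k::comm_ring_1"
  assumes fin: "finite (I \<union> J)" and dj: "I \<inter> J = {}"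
    and Kc: "\<forall>\<sigma>\<in>K. \<forall>\<tau>. \<tau> \<subseteq> \<sigma> \<longrightarrow> \<tau> \<in> K"
    and cb: "is_coboundary (full_sub K I) i (\<lambda>\<sigma>. f1 \<sigma> - f2 \<sigma>)"
    and cg: "cocycle (full_sub K J) j g"
  shows "is_coboundary (full_sub K (I \<union> J)) (i + j + 1)
     (\<lambda>\<rho>. join_cochain I J i j f1 g \<rho> - join_cochain I J i j f2 g \<rho>)"
proof -
  obtain h where h: "\<forall>\<sigma>\<in>simplices (full_sub K I) i. f1 \<sigma> - f2 \<sigma> = coboundary h \<sigma>"
    using cb unfolding is_coboundary_def by blast
  show ?thesis unfolding is_coboundary_def
  proof (intro exI[where x="join_cochain I J (i - 1) j h g"] ballI)
    fix \<rho> assume "\<rho> \<in> simplices (full_sub K (I \<union> J)) (i + j + 1)"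
    then have rK: "\<rho> \<in> K" and rV: "\<rho> \<subseteq> I \<union> J"
      by (auto simp: simplices_def full_sub_def)
    have fr: "finite \<rho>" using fin rV finite_subset by blast
    have inK: "\<And>s. s \<subseteq> \<rho> \<Longrightarrow> s \<in> K" using Kc rK by blast
    have L: "coboundary (join_cochain I J (i - 1) j h g) \<rho>
       = join_cochain I J (i - 1 + 1) j (coboundary h) g \<rho>
         + (-1)^card (\<rho> \<inter> I) * join_cochain I J (i - 1) (j + 1) h (coboundary g) \<rho>"
      by (rule leibniz[OF fr dj rV])
    have z: "join_cochain I J (i - 1) (j + 1) h (coboundary g) \<rho> = 0"
    proof (cases "int (card (\<rho> \<inter> J)) = j + 1 + 1")
      case True
      then have "\<rho> \<inter> J \<in> simplices (full_sub K J) (j + 1)"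
        using inK[of "\<rho> \<inter> J"] by (auto simp: simplices_def full_sub_def)
      then have "coboundary g (\<rho> \<inter> J) = 0" using cg by (simp add: cocycle_def)
      then show ?thesis unfolding join_cochain_def by simp
    next
      case False
      then show ?thesis unfolding join_cochain_def by simp
    qed
    have w: "join_cochain I J i j (coboundary h) g \<rho> = join_cochain I J i j f1 g \<rho> - join_cochain I J i j f2 g \<rho>"
    proof (cases "int (card (\<rho> \<inter> I)) = i + 1")
      case True
      then have "\<rho> \<inter> I \<in> simplices (full_sub K I) i"
        using inK[of "\<rho> \<inter> I"] by (auto simp: simplices_def full_sub_def)
      then have e: "coboundary h (\<rho> \<inter> I) = f1 (\<rho> \<inter> I) - f2 (\<rho> \<inter> I)" using h by simp
      show ?thesis unfolding join_cochain_def e by (simp add: algebra_simps)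
    next
      case False
      then show ?thesis unfolding join_cochain_def by simp
    qed
    show "join_cochain I J i j f1 g \<rho> - join_cochain I J i j f2 g \<rho> = coboundary (join_cochain I J (i - 1) j h g) \<rho>"
      using L z w by simp
  qed
qed

lemma rep_right:
  fixes f g1 g2 :: "nat set \<Rightarrow> 'k::comm_ring_1"
  assumes fin: "finite (I \<union> J)" and dj: "I \<inter> J = {}"
    and Kc: "\<forall>\<sigma>\<in>K. \<forall>\<tau>. \<tau> \<subseteq> \<sigma> \<longrightarrow> \<tau> \<in> K"
    and ii: "i \<ge> -1"
    and cb: "is_coboundary (full_sub K J) j (\<lambda>\<sigma>. g1 \<sigma> - g2 \<sigma>)"
    and cf: "cocycle (full_sub K I) i f"
  shows "is_coboundary (full_sub K (I \<union> J)) (i + j + 1)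
     (\<lambda>\<rho>. join_cochain I J i j f g1 \<rho> - join_cochain I J i j f g2 \<rho>)"
proof -
  obtain h where h: "\<forall>\<sigma>\<in>simplices (full_sub K J) j. g1 \<sigma> - g2 \<sigma> = coboundary h \<sigma>"
    using cb unfolding is_coboundary_def by blast
  define c :: 'k where "c = (-1)^nat (i + 1)"
  show ?thesis unfolding is_coboundary_def
  proof (intro exI[where x="\<lambda>\<sigma>. c * join_cochain I J i (j - 1) f h \<sigma>"] ballI)
    fix \<rho> assume "\<rho> \<in> simplices (full_sub K (I \<union> J)) (i + j + 1)"
    then have rK: "\<rho> \<in> K" and rV: "\<rho> \<subseteq> I \<union> J"
      by (auto simp: simplices_def full_sub_def)
    have fr: "finite \<rho>" using fin rV finite_subset by blast
    have inK: "\<And>s. s \<subseteq> \<rho> \<Longrightarrow> s \<in> K" using Kc rK by blast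
    have L: "coboundary (join_cochain I J i (j - 1) f h) \<rho>
       = join_cochain I J (i + 1) (j - 1) (coboundary f) h \<rho>
         + (-1)^card (\<rho> \<inter> I) * join_cochain I J i (j - 1 + 1) f (coboundary h) \<rho>"
      by (rule leibniz[OF fr dj rV])
    have z: "join_cochain I J (i + 1) (j - 1) (coboundary f) h \<rho> = 0"
    proof (cases "int (card (\<rho> \<inter> I)) = i + 1 + 1")
      case True
      then have "\<rho> \<inter> I \<in> simplices (full_sub K I) (i + 1)"
        using inK[of "\<rho> \<inter> I"] by (auto simp: simplices_def full_sub_def)
      then have "coboundary f (\<rho> \<inter> I) = 0" using cf by (simp add: cocycle_def)
      then show ?thesis unfolding join_cochain_def by simp
    next
      case False
      then show ?thesis unfolding join_cochain_def by simp
    qed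
    have w: "c * ((-1)^card (\<rho> \<inter> I) * join_cochain I J i j f (coboundary h) \<rho>)
       = join_cochain I J i j f g1 \<rho> - join_cochain I J i j f g2 \<rho>"
    proof (cases "int (card (\<rho> \<inter> I)) = i + 1 \<and> int (card (\<rho> \<inter> J)) = j + 1")
      case True
      then have "\<rho> \<inter> J \<in> simplices (full_sub K J) j"
        using inK[of "\<rho> \<inter> J"] by (auto simp: simplices_def full_sub_def)
      then have e: "coboundary h (\<rho> \<inter> J) = g1 (\<rho> \<inter> J) - g2 (\<rho> \<inter> J)" using h by simp
      have n: "nat (i + 1) = card (\<rho> \<inter> I)"
      proof -
        have "i + 1 = int (card (\<rho> \<inter> I))" using True by simp
        then show ?thesis by simp
      qed
      have cc: "c * (-1)^card (\<rho> \<inter> I) = 1" unfolding c_def n by (simp add: power_add[symmetric])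
      have "c * ((-1)^card (\<rho> \<inter> I) * join_cochain I J i j f (coboundary h) \<rho>)
          = (c * (-1)^card (\<rho> \<inter> I)) * join_cochain I J i j f (coboundary h) \<rho>" by (simp add: mult.assoc)
      also have "\<dots> = join_cochain I J i j f (coboundary h) \<rho>" by (simp add: cc)
      also have "\<dots> = join_cochain I J i j f g1 \<rho> - join_cochain I J i j f g2 \<rho>"
        unfolding join_cochain_def e using True by (simp add: algebra_simps)
      finally show ?thesis .
    next
      case False
      then show ?thesis unfolding join_cochain_def by (simp only: if_not_P[OF False]) simp
    qed
    show "join_cochain I J i j f g1 \<rho> - join_cochain I J i j f g2 \<rho> = coboundary (\<lambda>\<sigma>. c * join_cochain I J i (j - 1) f h \<sigma>) \<rho>"
      unfolding cob_scale L using z w by (simp add: distrib_left)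
  qed
qed



lemma in_own_class: "cocycle K p f \<Longrightarrow> f \<in> cohom_class K p f"
  unfolding cohom_class_def using is_cob_zero by simp

lemma some_in_rcohom:
  assumes "A \<in> rcohom K p"
  shows "(SOME f. f \<in> A) \<in> A"
proof -
  obtain f0 where "A = cohom_class K p f0" "cocycle K p f0" using assms unfolding rcohom_def by blast
  then have "f0 \<in> A" using in_own_class by blast
  then show ?thesis by (rule someI[where P="\<lambda>f. f \<in> A"])
qed

lemma mem_class: "g \<in> cohom_class K p f \<Longrightarrow> cocycle K p g \<and> is_coboundary K p (\<lambda>\<sigma>. f \<sigma> - g \<sigma>)"
  unfolding cohom_class_def by simp

theorem mainTheorem17:
  fixes K :: "nat set set" and m :: nat and i j :: int and I J I' :: "nat set"
    and \<alpha> \<beta> \<alpha>' :: "(nat set \<Rightarrow> 'k::comm_ring_1) set"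
  assumes "simplicial_complex m K"
    and "I \<subseteq> {1..m}" and "J \<subseteq> {1..m}" and "I \<inter> J = {}"
    and "i \<ge> -1" and "j \<ge> -1"
    and "\<alpha> \<in> rcohom (full_sub K I) i" and "\<beta> \<in> rcohom (full_sub K J) j"
    and "I \<subseteq> I'" and "I' \<subseteq> I \<union> J"
    and "\<alpha>' \<in> rcohom (full_sub K I') i"
    and "\<alpha> = induced_incl (full_sub K I) i \<alpha>'"
  shows "bh_mult K I J i j \<alpha> \<beta>
       = bh_mult K I' ((I \<union> J) - I') i j \<alpha>' (induced_incl (full_sub K ((I \<union> J) - I')) j \<beta>)"
proof -
  note sc = assms(1) and dj = assms(4) and ii = assms(5)
  have Kc: "\<forall>\<sigma>\<in>K. \<forall>\<tau>. \<tau> \<subseteq> \<sigma> \<longrightarrow> \<tau> \<in> K" using sc unfolding simplicial_complex_def by blast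
  have fin: "finite (I \<union> J)" using assms(2,3) finite_subset by auto
  define J' where "J' = (I \<union> J) - I'"
  define L where "L = I' - I"
  have I'L: "I' = I \<union> L" using assms(9) by (auto simp: L_def)
  have LJ: "L \<subseteq> J" using assms(10) by (auto simp: L_def)
  have J'L: "J' = J - L" using assms(9,10) dj by (auto simp: J'_def L_def)
  have fL: "finite L" using fin LJ finite_subset by blast
  have dj': "I' \<inter> J' = {}" by (auto simp: J'_def)
  have un': "I' \<union> J' = I \<union> J" using assms(9,10) by (auto simp: J'_def)
  have fin': "finite (I' \<union> J')" using fin un' by simp
  define f2 where "f2 = (SOME f. f \<in> \<alpha>')"
  have f2c: "cocycle (full_sub K I') i f2"
    using mem_class some_in_rcohom[OF assms(11)] assms(11) unfolding f2_def rcohom_def by blast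
  have aeq: "\<alpha> = cohom_class (full_sub K I) i f2" using assms(12) unfolding induced_incl_def f2_def by simp
  define f where "f = (SOME f. f \<in> \<alpha>)"
  have "f \<in> \<alpha>" unfolding f_def by (rule some_in_rcohom[OF assms(7)])
  then have fc: "cocycle (full_sub K I) i f" and fcb: "is_coboundary (full_sub K I) i (\<lambda>\<sigma>. f2 \<sigma> - f \<sigma>)"
    using mem_class aeq by blast+
  define g where "g = (SOME f. f \<in> \<beta>)"
  have "g \<in> \<beta>" unfolding g_def by (rule some_in_rcohom[OF assms(8)])
  then have gc: "cocycle (full_sub K J) j g"
    using assms(8) mem_class unfolding rcohom_def by blast
  define \<beta>i where "\<beta>i = induced_incl (full_sub K J') j \<beta>"
  have bieq: "\<beta>i = cohom_class (full_sub K J') j g" unfolding \<beta>i_def induced_incl_def g_def by simp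
  have gc': "cocycle (full_sub K J') j g" by (rule cocycle_mono[OF _ gc]) (auto simp: J'L)
  have "g \<in> \<beta>i" using bieq in_own_class[OF gc'] by simp
  then have "(SOME f. f \<in> \<beta>i) \<in> \<beta>i" by (rule someI[where P="\<lambda>f. f \<in> \<beta>i"])
  define g2 where "g2 = (SOME f. f \<in> \<beta>i)"
  have "g2 \<in> \<beta>i" unfolding g2_def using \<open>(SOME f. f \<in> \<beta>i) \<in> \<beta>i\<close> .
  then have gcb: "is_coboundary (full_sub K J') j (\<lambda>\<sigma>. g \<sigma> - g2 \<sigma>)"
    using mem_class bieq by blast
  have lhs: "bh_mult K I J i j \<alpha> \<beta> = cohom_class (full_sub K (I \<union> J)) (i + j + 1) (join_cochain I J i j f g)"
    unfolding bh_mult_def f_def g_def using dj by simp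
  have rhs: "bh_mult K I' J' i j \<alpha>' \<beta>i = cohom_class (full_sub K (I \<union> J)) (i + j + 1) (join_cochain I' J' i j f2 g2)"
    unfolding bh_mult_def f2_def g2_def using dj' un' by simp
  have c1: "is_coboundary (full_sub K (I \<union> J)) (i + j + 1)
      (\<lambda>\<rho>. join_cochain I J i j f g \<rho> - join_cochain I J i j f2 g \<rho>)"
    by (rule rep_left[OF fin dj Kc is_cob_neg[OF fcb] gc])
  have c2: "is_coboundary (full_sub K (I \<union> J)) (i + j + 1)
      (\<lambda>\<rho>. join_cochain I J i j f2 g \<rho> - join_cochain I' J' i j f2 g \<rho>)"
    using multi_step[OF fL fin dj LJ Kc] f2c gc unfolding I'L J'L by blast
  have c3: "is_coboundary (full_sub K (I \<union> J)) (i + j + 1)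
      (\<lambda>\<rho>. join_cochain I' J' i j f2 g \<rho> - join_cochain I' J' i j f2 g2 \<rho>)"
    using rep_right[OF fin' dj' Kc ii gcb f2c] un' by simp
  have "cohom_class (full_sub K (I \<union> J)) (i + j + 1) (join_cochain I J i j f g)
      = cohom_class (full_sub K (I \<union> J)) (i + j + 1) (join_cochain I' J' i j f2 g2)"
    by (rule class_eq[OF is_cob_trans[OF is_cob_trans[OF c1 c2] c3]])
  then show ?thesis using lhs rhs unfolding J'_def \<beta>i_def by simp
qed


end
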